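(* Let $q>5$ be a prime power which is either odd or a power of $4$. Then every partition of $\mathbb F_q^*$ which is preserved by $G(q)$ consists of all the cosets of some subgroup of $\mathbb F_q^*$.
   Context: $\mathbb F_q$ is the field with $q$ elements, $\mathbb F_q^*$ its multiplicative group. $G(q)$ denotes the group of permutations of $\mathbb F_q^*$ generated by all permutations of $\mathbb F_q^*$ which can be represented as $c\mapsto ac^m+bc^n$ with $a,b\in\mathbb F_q^*$ and integers $0<m<n<q$. A partition $\mathcal P$ of $\mathbb F_q^*$ is preserved by $G(q)$ if for every part $S$ of $\mathcal P$ and every $g\in G(q)$, the set $g(S)$ is also a part of $\mathcal P$. *)

theory Defs
  imports Main "HOL-Library.Disjoint_Sets"
begin

definition units_set :: "'a::field set" where
  "units_set = UNIV - {0}"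

definition binomial_perms :: "('a::{finite,field} \<Rightarrow> 'a) set" where
  "binomial_perms = {g. \<exists>a b m n. a \<noteq> 0 \<and> b \<noteq> 0 \<and> 0 < m \<and> m < n \<and> n < card (UNIV :: 'a set) \<and>
        g = (\<lambda>c. a * c ^ m + b * c ^ n) \<and> bij_betw g units_set units_set}"

text \<open>The group G(q) generated by the binomial permutations (as functions acting on the
  multiplicative group; only their values on the multiplicative group matter).\<close>
inductive_set Gq :: "('a::{finite,field} \<Rightarrow> 'a) set" where
  Gq_id: "id \<in> Gq"
| Gq_gen: "g \<in> binomial_perms \<Longrightarrow> g \<in> Gq"
| Gq_comp: "g \<in> Gq \<Longrightarrow> h \<in> Gq \<Longrightarrow> g \<circ> h \<in> Gq"
| Gq_inv: "g \<in> Gq \<Longrightarrow> inv_into units_set g \<in> Gq"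

definition preserved_by_Gq :: "'a::{finite,field} set set \<Rightarrow> bool" where
  "preserved_by_Gq P \<longleftrightarrow> (\<forall>S\<in>P. \<forall>g\<in>Gq. g ` S \<in> P)"

definition mult_subgroup :: "'a::field set \<Rightarrow> bool" where
  "mult_subgroup H \<longleftrightarrow> H \<subseteq> units_set \<and> 1 \<in> H \<and>
     (\<forall>x\<in>H. \<forall>y\<in>H. x * y \<in> H) \<and> (\<forall>x\<in>H. inverse x \<in> H)"

definition cosets_of :: "'a::field set \<Rightarrow> 'a set set" where
  "cosets_of H = {(\<lambda>x. a * x) ` H | a. a \<in> units_set}"

end

theory Submission imports Defs "HOL-Computational_Algebra.Polynomial" begin

lemma card_roots_pow_le:
  fixes n :: nat assumes "n \<ge> 1"
  shows "card {x::'a::field. x ^ n = 1} \<le> n"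
proof -
  define p :: "'a poly" where "p = [:-1:] + monom 1 n"
  have pe: "poly p x = x^n - 1" for x by (simp add: p_def poly_monom)
  have dp: "degree p = n" using assms unfolding p_def
    by (subst degree_add_eq_right) (auto simp: degree_monom_eq)
  have pn: "p \<noteq> 0" using dp assms by auto
  have "{x. x^n = 1} = {x. poly p x = 0}" by (auto simp: pe)
  thus ?thesis using card_poly_roots_bound[OF pn] dp by simp
qed

lemma invol_even:
  assumes "finite A" "\<And>x. x \<in> A \<Longrightarrow> f x \<in> A" "\<And>x. x \<in> A \<Longrightarrow> f (f x) = x"
    "\<And>x. x \<in> A \<Longrightarrow> f x \<noteq> x"
  shows "even (card A)"
  using assms
proof (induction "card A" arbitrary: A rule: less_induct)
  case less
  show ?case
  proof (cases "A = {}")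
    case True thus ?thesis by simp
  next
    case False
    then obtain x where x: "x \<in> A" by blast
    define B where "B = A - {x, f x}"
    have fx: "f x \<in> A" "f x \<noteq> x" using less.prems(2,4) x by auto
    have c2: "card {x, f x} = 2" using fx by auto
    have cB: "card A = card B + 2"
    proof -
      have "card B = card A - card {x, f x}" unfolding B_def using less.prems(1) x fx
        by (intro card_Diff_subset) auto
      moreover have "card {x, f x} \<le> card A" using less.prems(1) x fx
        by (intro card_mono) auto
      ultimately show ?thesis using c2 by linarith
    qed
    have "even (card B)"
    proof (rule less.hyps)
      show "card B < card A" using cB by simp
      show "finite B" using less.prems(1) unfolding B_def by simp
      fix y assume y: "y \<in> B"
      hence yA: "y \<in> A" and yx: "y \<noteq> x" and yfx: "y \<noteq> f x" unfolding B_def by auto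
      have "f y \<in> A" using less.prems(2) yA .
      moreover have "f y \<noteq> x" using less.prems(3)[OF yA] yfx by auto
      moreover have "f y \<noteq> f x" using less.prems(3)[OF yA] less.prems(3)[OF x] yx by metis
      ultimately show "f y \<in> B" unfolding B_def by simp
      show "f (f y) = y" using less.prems(3) yA by simp
      show "f y \<noteq> y" using less.prems(4) yA by simp
    qed
    thus ?thesis using cB by simp
  qed
qed
lemma two_ne_zero_odd:
  assumes "odd (card (UNIV :: 'a::{finite,field} set))"
  shows "(2::'a) \<noteq> 0"
proof
  assume h: "(2::'a) = 0"
  have "even (card (UNIV :: 'a set))"
  proof (rule invol_even[where f = "\<lambda>x. x + 1"])
    fix x :: 'a
    show "x + 1 + 1 = x" using h by (simp add: add.assoc one_add_one)
  qed auto
  thus False using assms by simp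
qed

lemma fermat:
  fixes x :: "'a::{finite,field}"
  assumes "x \<noteq> 0"
  shows "x ^ (card (UNIV :: 'a set) - 1) = 1"
proof -
  define U where "U = (UNIV :: 'a set) - {0}"
  have fU: "finite U" by simp
  have b: "bij_betw ((*) x) U U"
  proof (rule bij_betwI[where g = "\<lambda>y. y / x"])
    show "(*) x \<in> U \<rightarrow> U" unfolding U_def using assms by auto
    show "(\<lambda>y. y / x) \<in> U \<rightarrow> U" unfolding U_def using assms by auto
    show "\<And>y. y \<in> U \<Longrightarrow> x * y / x = y" using assms by simp
    show "\<And>y. y \<in> U \<Longrightarrow> x * (y / x) = y" using assms by simp
  qed
  have "prod (\<lambda>y. x * y) U = prod id U"
    using prod.reindex_bij_betw[OF b, of id] by simp
  moreover have "prod (\<lambda>y. x * y) U = x ^ card U * prod id U"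
    by (simp add: prod.distrib)
  moreover have "prod id U \<noteq> 0" unfolding U_def by simp
  ultimately have "x ^ card U = 1" by simp
  moreover have "card U = card (UNIV :: 'a set) - 1" unfolding U_def by (simp add: card_Diff_singleton)
  ultimately show ?thesis by simp
qed
lemma two_eq_zero_even:
  assumes "even (card (UNIV :: 'a::{finite,field} set))"
  shows "(2::'a) = 0"
proof (rule ccontr)
  assume h: "(2::'a) \<noteq> 0"
  have "even (card (UNIV - {0::'a}))"
  proof (rule invol_even[where f = uminus])
    fix x :: 'a assume "x \<in> UNIV - {0}"
    hence "x \<noteq> 0" by simp
    thus "- x \<noteq> x" using h by (metis add_eq_0_iff equation_minus_iff mult_2 no_zero_divisors)
  qed auto
  moreover have "card (UNIV - {0::'a}) = card (UNIV :: 'a set) - 1" by (simp add: card_Diff_singleton)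
  moreover have "card (UNIV :: 'a set) \<ge> 1" by (simp add: Suc_leI finite_UNIV_card_ge_0)
  ultimately show False using assms by simp
qed

lemma pow_card:
  fixes x :: "'a::{finite,field}"
  shows "x ^ card (UNIV :: 'a set) = x"
proof (cases "x = 0")
  case True thus ?thesis by (simp add: finite_UNIV_card_ge_0)
next
  case False
  have "card (UNIV :: 'a set) = Suc (card (UNIV :: 'a set) - 1)" by (simp add: finite_UNIV_card_ge_0)
  hence "x ^ card (UNIV :: 'a set) = x * x ^ (card (UNIV :: 'a set) - 1)"
    by (metis power_Suc)
  thus ?thesis using fermat[OF False] by simp
qed

lemma frob2:
  fixes x y :: "'a::field"
  assumes "(2::'a) = 0"
  shows "(x + y) ^ (2 ^ j) = x ^ (2 ^ j) + y ^ (2 ^ j)"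
proof (induction j)
  case 0 thus ?case by simp
next
  case (Suc j)
  have sq: "(X + Y)^2 = X^2 + Y^2" for X Y :: 'a
    using assms by (simp add: power2_sum)
  have "(x + y) ^ (2 ^ Suc j) = ((x+y)^(2^j))^2" by (simp add: power_mult[symmetric] mult.commute)
  also have "\<dots> = (x^(2^j))^2 + (y^(2^j))^2" using Suc sq by simp
  also have "\<dots> = x ^ (2 ^ Suc j) + y ^ (2 ^ Suc j)" by (simp add: power_mult[symmetric] mult.commute)
  finally show ?case .
qed

lemma neg_eq_char2:
  fixes x :: "'a::field"
  assumes "(2::'a) = 0"
  shows "- x = x"
proof -
  have "x + x = 0" using assms by (metis mult_2 mult_zero_left)
  thus ?thesis by (simp add: add_eq_0_iff)
qed

lemma nonroot_exists:
  assumes "n \<ge> 1" "n + 1 < card (UNIV :: 'a::{finite,field} set)"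
  shows "\<exists>x::'a. x \<noteq> 0 \<and> x ^ n \<noteq> 1"
proof (rule ccontr)
  assume "\<not> ?thesis"
  hence "(UNIV :: 'a set) \<subseteq> insert 0 {x. x ^ n = 1}" by auto
  hence "card (UNIV :: 'a set) \<le> card (insert 0 {x::'a. x ^ n = 1})"
    by (intro card_mono) auto
  also have "\<dots> \<le> Suc (card {x::'a. x ^ n = 1})" by (simp add: card_insert_le_m1)
  also have "\<dots> \<le> Suc n" using card_roots_pow_le[OF assms(1)] by simp
  finally show False using assms(2) by simp
qed

lemma binomial_permI:
  fixes a b :: "'a::{finite,field}"
  assumes "a \<noteq> 0" "b \<noteq> 0" "0 < m" "m < n" "n < card (UNIV::'a set)"
    and nz: "\<And>c. c \<noteq> 0 \<Longrightarrow> a * c ^ m + b * c ^ n \<noteq> 0"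
    and inj: "\<And>c d. c \<noteq> 0 \<Longrightarrow> d \<noteq> 0 \<Longrightarrow> a * c ^ m + b * c ^ n = a * d ^ m + b * d ^ n \<Longrightarrow> c = d"
  shows "(\<lambda>c. a * c ^ m + b * c ^ n) \<in> binomial_perms"
proof -
  let ?g = "\<lambda>c. a * c ^ m + b * c ^ n"
  have sub: "?g ` units_set \<subseteq> units_set" using nz by (auto simp: units_set_def)
  have ij: "inj_on ?g units_set" using inj by (auto simp: inj_on_def units_set_def)
  have "?g ` units_set = units_set" by (rule endo_inj_surj[OF _ sub ij]) simp
  hence "bij_betw ?g units_set units_set" using ij by (simp add: bij_betw_def)
  thus ?thesis unfolding binomial_perms_def using assms(1-5) by blast
qed

lemma char2_lin_perm:
  fixes a b :: "'a::{finite,field}"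
  assumes two: "(2::'a) = 0" and q: "card (UNIV::'a set) = s * s" and s: "s = 2^k" "k \<ge> 1"
    and ab: "a \<noteq> 0" "b \<noteq> 0" "(a / b) ^ (s + 1) \<noteq> 1"
  shows "(\<lambda>c. a * c ^ 1 + b * c ^ s) \<in> binomial_perms"
proof -
  have s2: "s \<ge> 2" using s power_increasing[of 1 k "2::nat"] by simp
  obtain r where sr: "s = Suc r" using s2 by (cases s) auto
  have ker: "c = 0" if h: "a * c + b * c ^ s = 0" for c
  proof (rule ccontr)
    assume c: "c \<noteq> 0"
    have "b * c ^ s = - (a * c)" using h by (metis add.commute add_eq_0_iff)
    hence bc: "b * c ^ s = a * c" using neg_eq_char2[OF two] by simp
    have cs: "c ^ s = c ^ (s - 1) * c" using sr by (simp add: power_Suc2)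
    have "b * c ^ (s - 1) * c = b * c ^ s" by (simp only: cs mult.assoc)
    also have "\<dots> = a * c" by (rule bc)
    finally have "b * c ^ (s - 1) * c = a * c" .
    hence "b * c ^ (s - 1) = a" using c by simp
    hence cq: "c ^ (s - 1) = a / b" using ab(2) by (simp add: field_simps)
    have "(a / b) ^ (s + 1) = (c ^ (s - 1)) ^ (s + 1)" by (simp only: cq)
    also have "\<dots> = c ^ ((s - 1) * (s + 1))" by (simp only: power_mult)
    also have "(s - 1) * (s + 1) = card (UNIV::'a set) - 1" using q sr by simp
    also have "c ^ \<dots> = 1" by (rule fermat[OF c])
    finally show False using ab(3) by simp
  qed
  have add: "a * (c + d) + b * (c + d) ^ s = (a * c + b * c ^ s) + (a * d + b * d ^ s)" for c d
    using frob2[OF two, of c d k] s by (simp add: algebra_simps)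
  show ?thesis
  proof (rule binomial_permI)
    show "a \<noteq> 0" "b \<noteq> 0" by (fact ab)+
    show "0 < (1::nat)" by simp
    show "1 < s" using s2 by simp
    show "s < card (UNIV::'a set)"
    proof -
      have "s * 1 < s * s" using s2 by (intro mult_less_mono2) auto
      thus ?thesis using q by simp
    qed
    show "a * c ^ 1 + b * c ^ s \<noteq> 0" if c0: "c \<noteq> 0" for c
    proof
      assume "a * c ^ 1 + b * c ^ s = 0"
      hence "a * c + b * c ^ s = 0" by (simp only: power_one_right)
      hence "c = 0" by (rule ker)
      thus False using c0 by contradiction
    qed
    show "c = d" if "a * c ^ 1 + b * c ^ s = a * d ^ 1 + b * d ^ s" for c d
    proof -
      have "a * (c + d) + b * (c + d) ^ s = (a * d + b * d ^ s) + (a * d + b * d ^ s)"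
      proof -
        have e: "a * c + b * c ^ s = a * d + b * d ^ s" using that by simp
        show ?thesis by (subst add) (simp only: e)
      qed
      also have "\<dots> = 0" using neg_eq_char2[OF two, of "a * d + b * d ^ s"]
        by (simp add: add_eq_0_iff)
      finally have "c + d = 0" using ker by blast
      hence "c = - d" by (simp add: eq_neg_iff_add_eq_0)
      thus "c = d" using neg_eq_char2[OF two] by simp
    qed
  qed
qed

lemma char2_mult_in_Gq:
  fixes l :: "'a::{finite,field}"
  assumes two: "(2::'a) = 0" and q: "card (UNIV::'a set) = s * s" and s: "s = 2^k" "k \<ge> 2"
    and l: "l \<noteq> 0"
  shows "(\<lambda>c. l * c) \<in> Gq"
proof -
  have k1: "k \<ge> 1" using s by simp
  have s4: "s \<ge> 4" using s power_increasing[of 2 k "2::nat"] by simp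
  have "s + 2 < s * s"
  proof -
    have "s * 4 \<le> s * s" using s4 by simp
    thus ?thesis using s4 by linarith
  qed
  then obtain t :: 'a where t: "t \<noteq> 0" "t ^ (s + 1) \<noteq> 1"
    using nonroot_exists[of "s + 1", where 'a='a] q by auto
  have t1: "t ^ (s + 1) + 1 \<noteq> 0"
  proof
    assume "t ^ (s + 1) + 1 = 0"
    hence "t ^ (s + 1) = - 1" by (simp add: eq_neg_iff_add_eq_0)
    thus False using t(2) neg_eq_char2[OF two, of 1] by simp
  qed
  define e where "e = l * t ^ s / (t ^ (s + 1) + 1)"
  define f where "f = e ^ s / t"
  have e0: "e \<noteq> 0" unfolding e_def using l t t1 by simp
  have f0: "f \<noteq> 0" unfolding f_def using e0 t by simp
  have ess: "e ^ (s * s) = e" using pow_card[of e] q by simp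
  have X: "(\<lambda>c. t * c ^ 1 + 1 * c ^ s) \<in> binomial_perms"
    by (rule char2_lin_perm[OF two q s(1) k1]) (use t in auto)
  have Y: "(\<lambda>c. e * c ^ 1 + f * c ^ s) \<in> binomial_perms"
  proof (rule char2_lin_perm[OF two q s(1) k1 e0 f0])
    have "e / f = t / e ^ s * e" unfolding f_def using t e0 by (simp add: field_simps)
    hence "(e / f) ^ (s + 1) = t ^ (s + 1) * e ^ (s + 1) / (e ^ s) ^ (s + 1)"
      by (simp add: power_mult_distrib power_divide)
    also have "(e ^ s) ^ (s + 1) = e ^ (s * s) * e ^ s"
      by (simp add: power_mult[symmetric] power_add algebra_simps)
    also have "\<dots> = e ^ (s + 1)" using ess by (simp add: power_add mult.commute)
    finally have "(e / f) ^ (s + 1) = t ^ (s + 1)" using e0 by simp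
    thus "(e / f) ^ (s + 1) \<noteq> 1" using t by simp
  qed
  have comp: "(\<lambda>c. t * c ^ 1 + 1 * c ^ s) \<circ> (\<lambda>c. e * c ^ 1 + f * c ^ s) = (\<lambda>c. l * c)"
  proof
    fix c :: 'a
    have css: "c ^ (s * s) = c" using pow_card[of c] q by simp
    have "(e * c + f * c ^ s) ^ s = (e * c) ^ s + (f * c ^ s) ^ s"
      using frob2[OF two, of "e * c" "f * c ^ s" k] s by simp
    also have "(f * c ^ s) ^ s = f ^ s * c ^ (s * s)" by (simp add: power_mult_distrib power_mult)
    also have "f ^ s = e / t ^ s" unfolding f_def using ess by (simp add: power_divide power_mult[symmetric])
    finally have fr: "(e * c + f * c ^ s) ^ s = e ^ s * c ^ s + e / t ^ s * c"
      using css by (simp add: power_mult_distrib)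
    have tf: "t * f = e ^ s" unfolding f_def using t by simp
    have "((\<lambda>c. t * c ^ 1 + 1 * c ^ s) \<circ> (\<lambda>c. e * c ^ 1 + f * c ^ s)) c
        = t * (e * c + f * c ^ s) + (e * c + f * c ^ s) ^ s" by simp
    also have "\<dots> = t * e * c + (t * f) * c ^ s + e ^ s * c ^ s + e / t ^ s * c"
      using fr by (simp add: algebra_simps)
    also have "\<dots> = t * e * c + e / t ^ s * c + (e ^ s * c ^ s + e ^ s * c ^ s)"
      using tf by (simp add: algebra_simps)
    also have "e ^ s * c ^ s + e ^ s * c ^ s = 0"
      using neg_eq_char2[OF two, of "e ^ s * c ^ s"] by (simp add: add_eq_0_iff)
    also have "t * e * c + e / t ^ s * c + 0 = e * (t ^ (s + 1) + 1) / t ^ s * c"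
      using t by (simp add: field_simps power_Suc2)
    also have "\<dots> = l * c"
    proof -
      have "e * (t ^ (s + 1) + 1) = l * t ^ s" unfolding e_def using t1 by simp
      thus ?thesis using t by simp
    qed
    finally show "((\<lambda>c. t * c ^ 1 + 1 * c ^ s) \<circ> (\<lambda>c. e * c ^ 1 + f * c ^ s)) c = l * c" .
  qed
  have "(\<lambda>c. t * c ^ 1 + 1 * c ^ s) \<circ> (\<lambda>c. e * c ^ 1 + f * c ^ s) \<in> Gq"
    by (intro Gq_comp Gq_gen X Y)
  thus ?thesis using comp by simp
qed

lemma odd_E:
  fixes c :: "'a::{finite,field}"
  assumes odd: "odd (card (UNIV::'a set))" and c: "c \<noteq> 0"
  shows "c ^ ((card (UNIV::'a set) - 1) div 2) = 1 \<or> c ^ ((card (UNIV::'a set) - 1) div 2) = -1"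
proof -
  let ?h = "(card (UNIV::'a set) - 1) div 2"
  have "2 * ?h = card (UNIV::'a set) - 1" using odd by simp
  hence "(c ^ ?h) ^ 2 = 1" using fermat[OF c] by (simp add: power_mult[symmetric] mult.commute)
  thus ?thesis by (simp add: power2_eq_1_iff)
qed

lemma odd_gen:
  fixes u v :: "'a::{finite,field}"
  defines "h \<equiv> (card (UNIV::'a set) - 1) div 2"
  assumes two: "(2::'a) \<noteq> 0" and odd: "odd (card (UNIV::'a set))" and q3: "card (UNIV::'a set) \<ge> 3"
    and uv: "u \<noteq> 0" "v \<noteq> 0" "u ^ h = v ^ h" "u \<noteq> v" "u \<noteq> - v"
  shows "(\<lambda>c. ((u + v) / 2) * c ^ 1 + ((u - v) / 2) * c ^ (1 + h)) \<in> binomial_perms"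
    and "\<And>c. c ^ h = 1 \<Longrightarrow> ((u + v) / 2) * c ^ 1 + ((u - v) / 2) * c ^ (1 + h) = u * c"
    and "\<And>c. c ^ h = -1 \<Longrightarrow> ((u + v) / 2) * c ^ 1 + ((u - v) / 2) * c ^ (1 + h) = v * c"
    and "\<And>c. c = 0 \<Longrightarrow> ((u + v) / 2) * c ^ 1 + ((u - v) / 2) * c ^ (1 + h) = 0"
proof -
  let ?g = "\<lambda>c. ((u + v) / 2) * c ^ 1 + ((u - v) / 2) * c ^ (1 + h)"
  have gc: "?g c = ((u + v) / 2) * c + ((u - v) / 2) * c * c ^ h" for c
    by (simp only: power_one_right power_add mult.assoc)
  have k1: "(u + v) / 2 + (u - v) / 2 = u"
  proof -
    have e1: "(u + v) / 2 + (u - v) / 2 = ((u + v) + (u - v)) / 2" by (rule add_divide_distrib[symmetric])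
    have e2: "(u + v) + (u - v) = 2 * u" by algebra
    have e3: "2 * u / 2 = u" using two by (rule nonzero_mult_div_cancel_left)
    show ?thesis unfolding e1 e2 e3 by (rule refl)
  qed
  have k2: "(u + v) / 2 - (u - v) / 2 = v"
  proof -
    have e1: "(u + v) / 2 - (u - v) / 2 = ((u + v) - (u - v)) / 2" by (rule diff_divide_distrib[symmetric])
    have e2: "(u + v) - (u - v) = 2 * v" by algebra
    have e3: "2 * v / 2 = v" using two by (rule nonzero_mult_div_cancel_left)
    show ?thesis unfolding e1 e2 e3 by (rule refl)
  qed
  show g1: "?g c = u * c" if ch: "c ^ h = 1" for c
  proof -
    have "?g c = ((u + v) / 2) * c + ((u - v) / 2) * c * 1" by (simp only: gc ch)
    also have "\<dots> = ((u + v) / 2 + (u - v) / 2) * c" by (simp only: mult_1_right distrib_right)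
    also have "\<dots> = u * c" by (simp only: k1)
    finally show ?thesis .
  qed
  show g2: "?g c = v * c" if ch: "c ^ h = -1" for c
  proof -
    have "?g c = ((u + v) / 2) * c + ((u - v) / 2) * c * (- 1)" by (simp only: gc ch)
    also have "\<dots> = ((u + v) / 2 - (u - v) / 2) * c" by (simp only: mult_minus1_right) (metis diff_conv_add_uminus left_diff_distrib)
    also have "\<dots> = v * c" by (simp only: k2)
    finally show ?thesis .
  qed
  show "?g c = 0" if "c = 0" for c using that by simp
  have E: "c ^ h = 1 \<or> c ^ h = -1" if "c \<noteq> 0" for c :: 'a
    unfolding h_def by (rule odd_E[OF odd that])
  have h1: "h \<ge> 1" unfolding h_def using q3 by simp
  have hq: "1 + h < card (UNIV::'a set)" unfolding h_def using q3 by simp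
  have cross: False if c: "c \<noteq> 0" "c ^ h = 1" and d: "d \<noteq> 0" "d ^ h = -1" and e: "u * c = v * d" for c d
  proof -
    have "(u * c) ^ h = (v * d) ^ h" using e by simp
    hence "u ^ h = - (v ^ h)" using c d by (simp add: power_mult_distrib)
    hence "u ^ h = - (u ^ h)" using uv(3) by simp
    hence "u ^ h + u ^ h = 0" by (simp only: eq_neg_iff_add_eq_0)
    hence "2 * u ^ h = 0" by (simp only: mult_2)
    hence "u ^ h = 0" using two by simp
    thus False using uv(1) by simp
  qed
  show "?g \<in> binomial_perms"
  proof (rule binomial_permI)
    show "(u + v) / 2 \<noteq> 0" using two uv(5) by (metis divide_eq_0_iff eq_neg_iff_add_eq_0)
    show "(u - v) / 2 \<noteq> 0" using two uv(4) by simp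
    show "0 < (1::nat)" "1 < 1 + h" using h1 by auto
    show "1 + h < card (UNIV::'a set)" by (fact hq)
    show "?g c \<noteq> 0" if "c \<noteq> 0" for c
      using E[OF that] g1 g2 that uv(1,2) by auto
    show "c = d" if c: "c \<noteq> 0" and d: "d \<noteq> 0" and eq: "?g c = ?g d" for c d
    proof -
      from E[OF c] E[OF d] show ?thesis
      proof (elim disjE)
        assume "c ^ h = 1" "d ^ h = 1" thus ?thesis using eq g1 uv(1) by simp
      next
        assume "c ^ h = -1" "d ^ h = -1" thus ?thesis using eq g2 uv(2) by simp
      next
        assume a: "c ^ h = 1" "d ^ h = -1"
        hence "u * c = v * d" using eq g1 g2 by simp
        thus ?thesis using cross[OF c a(1) d a(2)] by simp
      next
        assume a: "c ^ h = -1" "d ^ h = 1"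
        hence "u * d = v * c" using eq g1 g2 by simp
        thus ?thesis using cross[OF d a(2) c a(1)] by simp
      qed
    qed
  qed
qed

lemma odd_mult_in_Gq:
  fixes l :: "'a::{finite,field}"
  assumes odd: "odd (card (UNIV::'a set))" and q5: "card (UNIV::'a set) > 5" and l: "l \<noteq> 0"
  shows "(\<lambda>c. l * c) \<in> Gq"
proof -
  define h where "h = (card (UNIV::'a set) - 1) div 2"
  have two: "(2::'a) \<noteq> 0" by (rule two_ne_zero_odd[OF odd])
  have q3: "card (UNIV::'a set) \<ge> 3" using q5 by simp
  obtain s :: 'a where s: "s \<noteq> 0" "s ^ 4 \<noteq> 1"
    using nonroot_exists[of 4, where 'a='a] q5 by auto
  define t where "t = s ^ 2"
  have t0: "t \<noteq> 0" unfolding t_def using s by simp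
  have "2 * h = card (UNIV::'a set) - 1" unfolding h_def using odd by simp
  hence th: "t ^ h = 1" unfolding t_def using fermat[OF s(1)] by (simp add: power_mult[symmetric])
  have t2: "t ^ 2 \<noteq> 1" unfolding t_def using s by (simp add: power_mult[symmetric])
  have tn1: "t \<noteq> 1" using t2 by auto
  have tnm1: "t \<noteq> -1" using t2 by auto
  let ?Y = "\<lambda>c. ((t + 1) / 2) * c ^ 1 + ((t - 1) / 2) * c ^ (1 + h)"
  let ?X = "\<lambda>c. ((l / t + l) / 2) * c ^ 1 + ((l / t - l) / 2) * c ^ (1 + h)"
  have th1: "t ^ h = 1 ^ h" using th by simp
  note Yg = odd_gen[of t 1, folded h_def, OF two odd q3 t0 one_neq_zero th1 tn1 tnm1]
  have Yp: "?Y \<in> binomial_perms" by (rule Yg(1))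
  have Y1: "\<And>c. c ^ h = 1 \<Longrightarrow> ?Y c = t * c" by (rule Yg(2))
  have Y2: "\<And>c. c ^ h = -1 \<Longrightarrow> ?Y c = 1 * c" by (rule Yg(3))
  have Y0: "?Y 0 = 0" by (rule Yg(4)) (rule refl)
  have lt0: "l / t \<noteq> 0" using l t0 by simp
  have lth: "(l / t) ^ h = l ^ h" using th by (simp add: power_divide)
  have ltl: "l / t \<noteq> l" using l t0 tn1 by (simp add: field_simps)
  have ltm: "l / t \<noteq> - l"
  proof
    assume h: "l / t = - l"
    have "l = (l / t) * t" using t0 by simp
    also have "\<dots> = - l * t" by (simp only: h)
    finally have hl: "l = - l * t" .
    have "l + l * t = - l * t + l * t" using hl by (rule arg_cong[where f = "\<lambda>x. x + l * t"])
    also have "\<dots> = 0" by simp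
    finally have "l + l * t = 0" .
    hence "l * (1 + t) = 0" by (simp only: distrib_left mult_1_right)
    hence "1 + t = 0" using l by simp
    hence "t = - 1" by (simp only: add_eq_0_iff)
    thus False using tnm1 by simp
  qed
  note Xg = odd_gen[of "l / t" l, folded h_def, OF two odd q3 lt0 l lth ltl ltm]
  have Xp: "?X \<in> binomial_perms" by (rule Xg(1))
  have X1: "\<And>c. c ^ h = 1 \<Longrightarrow> ?X c = l / t * c" by (rule Xg(2))
  have X2: "\<And>c. c ^ h = -1 \<Longrightarrow> ?X c = l * c" by (rule Xg(3))
  have X0: "?X 0 = 0" by (rule Xg(4)) (rule refl)
  have comp: "?X \<circ> ?Y = (\<lambda>c. l * c)"
  proof
    fix c :: 'a
    show "(?X \<circ> ?Y) c = l * c"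
    proof (cases "c = 0")
      case True thus ?thesis using X0 Y0 by simp
    next
      case False
      from odd_E[OF odd False, folded h_def] show ?thesis
      proof
        assume ch: "c ^ h = 1"
        have tc: "(t * c) ^ h = 1" using th ch by (simp only: power_mult_distrib mult_1_right)
        have "(?X \<circ> ?Y) c = ?X (t * c)" using Y1[OF ch] by simp
        also have "\<dots> = l / t * (t * c)" by (rule X1[OF tc])
        also have "\<dots> = l * c" using t0 by simp
        finally show ?thesis .
      next
        assume ch: "c ^ h = -1"
        have "(?X \<circ> ?Y) c = ?X c" using Y2[OF ch] by simp
        also have "\<dots> = l * c" by (rule X2[OF ch])
        finally show ?thesis .
      qed
    qed
  qed
  have "?X \<circ> ?Y \<in> Gq" by (intro Gq_comp Gq_gen Xp Yp)
  thus ?thesis using comp by simp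
qed

lemma mult_in_Gq:
  fixes l :: "'a::{finite,field}"
  assumes q5: "card (UNIV :: 'a set) > 5"
    and qq: "odd (card (UNIV :: 'a set)) \<or> (\<exists>k::nat. card (UNIV :: 'a set) = 4 ^ k)"
    and l: "l \<noteq> 0"
  shows "(\<lambda>c. l * c) \<in> Gq"
proof (cases "odd (card (UNIV :: 'a set))")
  case True
  thus ?thesis using odd_mult_in_Gq[OF True q5 l] by simp
next
  case False
  then obtain k :: nat where k: "card (UNIV :: 'a set) = 4 ^ k" using qq by blast
  have k2: "k \<ge> 2"
  proof (rule ccontr)
    assume "\<not> k \<ge> 2"
    hence "k = 0 \<or> k = 1" by auto
    thus False using k q5 by auto
  qed
  have two: "(2::'a) = 0" using two_eq_zero_even False by blast
  have q: "card (UNIV :: 'a set) = 2 ^ k * 2 ^ k"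
    using k by (simp add: power_mult_distrib[symmetric])
  show ?thesis by (rule char2_mult_in_Gq[OF two q refl k2 l])
qed

lemma same_part:
  assumes "partition_on A P" "S \<in> P" "T \<in> P" "x \<in> S" "x \<in> T"
  shows "S = T"
  using assms unfolding partition_on_def disjoint_def by blast

theorem corollary4p5:
  fixes P :: "'a::{finite,field} set set"
  assumes "card (UNIV :: 'a set) > 5"
    and "odd (card (UNIV :: 'a set)) \<or> (\<exists>k::nat. card (UNIV :: 'a set) = 4 ^ k)"
    and "partition_on units_set P"
    and "preserved_by_Gq P"
  shows "\<exists>H. mult_subgroup H \<and> P = cosets_of H"
proof -
  have part: "partition_on units_set P" by (fact assms(3))
  have MP: "(\<lambda>c. l * c) ` S \<in> P" if "l \<noteq> 0" "S \<in> P" for l :: 'a and S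
    using assms(4) mult_in_Gq[OF assms(1,2) that(1)] that(2) unfolding preserved_by_Gq_def by blast
  have UP: "\<Union>P = units_set" using part unfolding partition_on_def by blast
  have ne: "{} \<notin> P" using part unfolding partition_on_def by blast
  have inU: "x \<noteq> 0" if "x \<in> S" "S \<in> P" for x S
    using that UP unfolding units_set_def by blast
  have "(1::'a) \<in> units_set" unfolding units_set_def by simp
  then obtain H where H: "H \<in> P" "1 \<in> H" using UP by blast
  have key: "(\<lambda>c. x * c) ` H = S" if "S \<in> P" "x \<in> S" for x S
  proof (rule same_part[OF part MP[OF inU[OF that(2,1)] H(1)] that(1)])
    show "x \<in> (\<lambda>c. x * c) ` H" using H(2) by (intro image_eqI[where x=1]) auto
    show "x \<in> S" by (fact that(2))
  qed
  have sg: "mult_subgroup H"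
    unfolding mult_subgroup_def
  proof (intro conjI ballI)
    show "H \<subseteq> units_set" using H(1) UP by blast
    show "1 \<in> H" by (fact H(2))
    fix x assume x: "x \<in> H"
    {
      fix y assume y: "y \<in> H"
      have "x * y \<in> (\<lambda>c. x * c) ` H" using y by blast
      thus "x * y \<in> H" using key[OF H(1) x] by simp
    }
    have x0: "x \<noteq> 0" using inU[OF x H(1)] .
    have ix: "inverse x \<noteq> 0" using x0 by simp
    have M: "(\<lambda>c. inverse x * c) ` H \<in> P" by (rule MP[OF ix H(1)])
    have "1 \<in> (\<lambda>c. inverse x * c) ` H" using x x0 by (intro image_eqI[where x=x]) auto
    hence eq: "(\<lambda>c. inverse x * c) ` H = H" by (rule same_part[OF part M H(1) _ H(2)])
    have "inverse x \<in> (\<lambda>c. inverse x * c) ` H" using H(2) by (intro image_eqI[where x=1]) auto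
    thus "inverse x \<in> H" using eq by simp
  qed
  have "P = cosets_of H"
  proof
    show "P \<subseteq> cosets_of H"
    proof
      fix S assume S: "S \<in> P"
      then obtain a where a: "a \<in> S" using ne by (metis ex_in_conv)
      have "S = (\<lambda>c. a * c) ` H" using key[OF S a] by simp
      moreover have "a \<in> units_set" using inU[OF a S] unfolding units_set_def by simp
      ultimately show "S \<in> cosets_of H" unfolding cosets_of_def by blast
    qed
    show "cosets_of H \<subseteq> P"
    proof
      fix S assume "S \<in> cosets_of H"
      then obtain a where a: "a \<in> units_set" "S = (\<lambda>x. a * x) ` H" unfolding cosets_of_def by blast
      have "a \<noteq> 0" using a(1) unfolding units_set_def by simp
      thus "S \<in> P" using MP[OF _ H(1)] a(2) by simp
    qed
  qed
  thus ?thesis using sg by blast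
qed

end
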